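(* Let $n$ be a positive integer. There exist unbounded domains $D_1$ and $D_2$ in $\mathbb{C}^n$ such that the semigroups $E(D_1)$ and $E(D_2)$ are isomorphic, but there is no biholomorphic and no antibiholomorphic map from $D_1$ onto $D_2$.
   Context: For a domain $D$, $E(D)$ denotes the semigroup under composition of all holomorphic maps $D\to D$. *)

theory Defs
  imports "HOL-Analysis.Analysis" "HOL-Library.FuncSet"
begin

definition holo_on :: "(complex^'n \<Rightarrow> complex^'m) \<Rightarrow> (complex^'n) set \<Rightarrow> bool" where
  "holo_on f D \<longleftrightarrow> (\<forall>z\<in>D. \<exists>L. (f has_derivative L) (at z) \<and> Vector_Spaces.linear (*s) (*s) L)"

definition cconj :: "complex^'n \<Rightarrow> complex^'n" where
  "cconj z = (\<chi> i. cnj (z $ i))"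

definition antiholo_on :: "(complex^'n \<Rightarrow> complex^'m) \<Rightarrow> (complex^'n) set \<Rightarrow> bool" where
  "antiholo_on f D \<longleftrightarrow> holo_on (\<lambda>z. cconj (f z)) D"

definition domain_cn :: "(complex^'n) set \<Rightarrow> bool" where
  "domain_cn D \<longleftrightarrow> open D \<and> connected D \<and> D \<noteq> {}"

text \<open>E(D): holomorphic self-maps of D, represented extensionally (undefined outside D).\<close>
definition End_holo :: "(complex^'n) set \<Rightarrow> (complex^'n \<Rightarrow> complex^'n) set" where
  "End_holo D = {f. holo_on f D \<and> f ` D \<subseteq> D \<and> f \<in> extensional D}"

definition comp_on :: "(complex^'n) set \<Rightarrow> (complex^'n \<Rightarrow> complex^'n) \<Rightarrow> (complex^'n \<Rightarrow> complex^'n) \<Rightarrow> (complex^'n \<Rightarrow> complex^'n)" where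
  "comp_on D f g = restrict (f \<circ> g) D"

definition semigroups_iso :: "(complex^'n) set \<Rightarrow> (complex^'n) set \<Rightarrow> bool" where
  "semigroups_iso D1 D2 \<longleftrightarrow> (\<exists>\<Phi>. bij_betw \<Phi> (End_holo D1) (End_holo D2) \<and>
     (\<forall>f\<in>End_holo D1. \<forall>g\<in>End_holo D1. \<Phi> (comp_on D1 f g) = comp_on D2 (\<Phi> f) (\<Phi> g)))"

definition biholo_onto :: "(complex^'n \<Rightarrow> complex^'n) \<Rightarrow> (complex^'n) set \<Rightarrow> (complex^'n) set \<Rightarrow> bool" where
  "biholo_onto f D1 D2 \<longleftrightarrow> bij_betw f D1 D2 \<and> holo_on f D1 \<and> holo_on (inv_into D1 f) D2"

definition antibiholo_onto :: "(complex^'n \<Rightarrow> complex^'n) \<Rightarrow> (complex^'n) set \<Rightarrow> (complex^'n) set \<Rightarrow> bool" where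
  "antibiholo_onto f D1 D2 \<longleftrightarrow> bij_betw f D1 D2 \<and> antiholo_on f D1 \<and> antiholo_on (inv_into D1 f) D2"

end

theory Submission
  imports Defs "HOL-Complex_Analysis.Complex_Analysis" "HOL-Computational_Algebra.Fundamental_Theorem_Algebra"
begin

definition atx :: "complex option \<Rightarrow> complex filter" where
  "atx a = (case a of Some s \<Rightarrow> at s | None \<Rightarrow> at_infinity)"
definition nhx :: "complex option \<Rightarrow> complex filter" where
  "nhx b = (case b of Some w \<Rightarrow> nhds w | None \<Rightarrow> at_infinity)"

lemma picard_limit:
  assumes M: "open M" "z \<in> M" and ab: "a \<noteq> b" and holf: "f holomorphic_on (M - {z})"
    and om: "\<And>w. w \<in> M - {z} \<Longrightarrow> f w \<noteq> a \<and> f w \<noteq> b"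
  shows "(\<exists>l. (f \<longlongrightarrow> l) (at z)) \<or> filterlim f at_infinity (at z)"
proof -
  let ?h = "\<lambda>w. f w - a"
  have "?h holomorphic_on (M - {z})" by (intro holomorphic_intros holf)
  moreover have "\<And>w. w \<in> M - {z} \<Longrightarrow> ?h w \<noteq> 0 \<and> ?h w \<noteq> b - a" using om by auto
  moreover have "0 \<noteq> b - a" using ab by simp
  ultimately obtain l where l: "(?h \<longlongrightarrow> l) (at z) \<or> ((inverse \<circ> ?h) \<longlongrightarrow> l) (at z)"
    using great_Picard[OF M, of 0 "b - a" ?h] by blast
  have ev: "eventually (\<lambda>w. w \<in> M - {z}) (at z)"
    unfolding eventually_at_topological using M by blast
  have evh: "eventually (\<lambda>w. ?h w \<noteq> 0) (at z)"
    using ev by eventually_elim (use om in auto)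
  from l show ?thesis
  proof
    assume "(?h \<longlongrightarrow> l) (at z)"
    then have "((\<lambda>w. ?h w + a) \<longlongrightarrow> l + a) (at z)" by (intro tendsto_intros)
    then show ?thesis by auto
  next
    assume li: "((inverse \<circ> ?h) \<longlongrightarrow> l) (at z)"
    show ?thesis
    proof (cases "l = 0")
      case False
      have "((\<lambda>w. inverse ((inverse \<circ> ?h) w)) \<longlongrightarrow> inverse l) (at z)"
        by (rule tendsto_inverse[OF li False])
      then have "((\<lambda>w. ?h w + a) \<longlongrightarrow> inverse l + a) (at z)"
        by (intro tendsto_intros) simp
      then show ?thesis by auto
    next
      case True
      have "filterlim (\<lambda>w. inverse (?h w)) (at 0) (at z)"
        using li True evh by (intro filterlim_atI) (auto simp: o_def elim: eventually_mono)
      then have "filterlim ?h at_infinity (at z)"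
        by (simp add: filterlim_inverse_at_iff)
      then have "filterlim (\<lambda>w. ?h w + a) at_infinity (at z)"
        by (rule tendsto_add_filterlim_at_infinity') (rule tendsto_const)
      then show ?thesis by simp
    qed
  qed
qed

lemma filterlim_at_infinity_via_0:
  "filterlim (\<lambda>w. f (inverse w)) F (at (0::complex)) \<Longrightarrow> filterlim f F at_infinity"
  by (simp add: at_to_infinity filterlim_filtermap)

lemma picard_ext_limit:
  fixes S :: "complex set"
  assumes S: "finite S" and ab: "a \<noteq> b" and holf: "f holomorphic_on (- S)"
    and om: "\<And>w. w \<in> - S \<Longrightarrow> f w \<noteq> a \<and> f w \<noteq> b"
    and x: "x \<in> insert None (Some ` S)"
  shows "\<exists>y. filterlim f (nhx y) (atx x)"
proof (cases x)
  case (Some s)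
  then have s: "s \<in> S" using x by auto
  have "open (- (S - {s}))" using S by (intro open_Compl finite_imp_closed) simp
  moreover have "- (S - {s}) - {s} = - S" using s by auto
  ultimately have "(\<exists>l. (f \<longlongrightarrow> l) (at s)) \<or> filterlim f at_infinity (at s)"
    using picard_limit[of "- (S - {s})" s a b f] ab holf om by auto
  then show ?thesis
    by (auto simp: Some atx_def nhx_def split: option.splits)
next
  case None
  let ?M = "- (inverse ` (S - {0}))"
  let ?g = "\<lambda>w. f (inverse w)"
  have oM: "open ?M" using S by (intro open_Compl finite_imp_closed) simp
  have 0: "0 \<in> ?M" by auto
  have sub: "w \<in> ?M - {0} \<Longrightarrow> inverse w \<in> - S" for w
  proof -
    assume w: "w \<in> ?M - {0}"
    show "inverse w \<in> - S"
    proof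
      assume "inverse w \<in> S"
      moreover have "inverse w \<noteq> 0" using w by simp
      ultimately have "inverse (inverse w) \<in> inverse ` (S - {0})" by blast
      with w show False by simp
    qed
  qed
  have "?g holomorphic_on (?M - {0})"
  proof -
    have "inverse holomorphic_on (?M - {0})" by (intro holomorphic_intros) auto
    moreover have "f holomorphic_on inverse ` (?M - {0})"
      by (rule holomorphic_on_subset[OF holf]) (use sub in auto)
    ultimately show ?thesis
      using holomorphic_on_compose[of inverse "?M - {0}" f] by (simp add: o_def)
  qed
  then have "(\<exists>l. (?g \<longlongrightarrow> l) (at 0)) \<or> filterlim ?g at_infinity (at 0)"
    using picard_limit[OF oM 0 ab, of ?g] om sub by auto
  then show ?thesis
    by (auto simp: None atx_def nhx_def split: option.splits intro: filterlim_at_infinity_via_0)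
qed

lemma ev_notin_at:
  fixes S :: "complex set"
  assumes "finite S" shows "eventually (\<lambda>w. w \<notin> S) (at z)"
proof -
  have "open (- (S - {z}))" using assms by (intro open_Compl finite_imp_closed) simp
  then show ?thesis unfolding eventually_at_topological by (rule_tac x="- (S - {z})" in exI) auto
qed

lemma ev_notin_at_infinity:
  fixes S :: "complex set"
  assumes "finite S" shows "eventually (\<lambda>w. w \<notin> S) at_infinity"
proof -
  obtain B where B: "\<And>s. s \<in> S \<Longrightarrow> norm s \<le> B"
    using finite_imp_bounded[OF assms] bounded_iff by blast
  show ?thesis unfolding eventually_at_infinity
    by (rule exI[of _ "B + 1"]) (use B in force)
qed

lemma entire_ext:
  fixes S :: "complex set"
  assumes S: "finite S" and holg: "g holomorphic_on (- S)"
    and lim: "\<And>s. s \<in> S \<Longrightarrow> (g \<longlongrightarrow> u s) (at s)"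
  shows "(\<lambda>z. if z \<in> S then u z else g z) holomorphic_on UNIV"
proof (rule no_isolated_singularity'[where K = S])
  fix s assume s: "s \<in> S"
  have "eventually (\<lambda>z. g z = (if z \<in> S then u z else g z)) (at s)"
    using ev_notin_at[OF S] by eventually_elim auto
  then show "((\<lambda>z. if z \<in> S then u z else g z) \<longlongrightarrow> (if s \<in> S then u s else g s)) (at s within UNIV)"
    using lim[OF s] s tendsto_cong by fastforce
next
  have "(\<lambda>z. if z \<in> S then u z else g z) holomorphic_on - S"
    by (rule holomorphic_transform[OF holg]) auto
  then show "(\<lambda>z. if z \<in> S then u z else g z) holomorphic_on UNIV - S"
    by (simp add: Compl_eq_Diff_UNIV)
qed (use S in auto)

lemma liouville_ext:
  fixes S :: "complex set"
  assumes S: "finite S" and holg: "g holomorphic_on (- S)"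
    and lim: "\<And>s. s \<in> S \<Longrightarrow> (g \<longlongrightarrow> u s) (at s)"
    and liminf: "(g \<longlongrightarrow> l) at_infinity" and z: "z \<in> - S"
  shows "g z = l"
proof -
  let ?G = "\<lambda>z. if z \<in> S then u z else g z"
  have "eventually (\<lambda>z. g z = ?G z) at_infinity"
    using ev_notin_at_infinity[OF S] by eventually_elim auto
  then have "(?G \<longlongrightarrow> l) at_infinity" using liminf tendsto_cong by fastforce
  from Liouville_weak[OF entire_ext[OF S holg lim] this] have "?G z = l" .
  then show ?thesis using z by simp
qed

lemma poly_of_sum: fixes a :: "nat \<Rightarrow> complex" shows "poly (\<Sum>i\<le>n. monom (a i) i) z = (\<Sum>i\<le>n. a i * z ^ i)"
  by (simp add: poly_sum poly_monom)

lemma poly_ext: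
  fixes S :: "complex set"
  assumes S: "finite S" and holg: "g holomorphic_on (- S)"
    and lim: "\<And>s. s \<in> S \<Longrightarrow> (g \<longlongrightarrow> u s) (at s)"
    and liminf: "filterlim g at_infinity at_infinity"
  shows "\<exists>P. (\<forall>z\<in>- S. g z = poly P z) \<and> (\<forall>s\<in>S. poly P s = u s)"
proof -
  let ?G = "\<lambda>z. if z \<in> S then u z else g z"
  have "eventually (\<lambda>z. g z = ?G z) at_infinity"
    using ev_notin_at_infinity[OF S] by eventually_elim auto
  then have "filterlim ?G at_infinity at_infinity" using liminf filterlim_cong by fastforce
  then have "((inverse \<circ> ?G) \<longlongrightarrow> 0) at_infinity"
    unfolding o_def by (rule filterlim_compose[OF tendsto_inverse_0])
  then obtain a n where an: "\<And>z. ?G z = (\<Sum>i\<le>n. a i * z^i)"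
    using pole_at_infinity[OF entire_ext[OF S holg lim]] by blast
  show ?thesis
    by (rule exI[of _ "\<Sum>i\<le>n. monom (a i) i"]) (auto simp: poly_of_sum an[symmetric] split: if_splits)
qed

lemma limits_surj:
  fixes S T :: "complex set"
  assumes S: "finite S" and holf: "f holomorphic_on (- S)" and ft: "\<And>z. z \<in> - S \<Longrightarrow> f z \<notin> T"
    and L: "\<And>x. x \<in> insert None (Some ` S) \<Longrightarrow> filterlim f (nhx (L x)) (atx x)"
    and nc: "x1 \<in> - S" "x2 \<in> - S" "f x1 \<noteq> f x2"
  shows "insert None (Some ` T) \<subseteq> L ` insert None (Some ` S)"
proof (rule ccontr)
  assume "\<not> ?thesis"
  then consider "None \<notin> L ` insert None (Some ` S)"
    | t where "t \<in> T" "Some t \<notin> L ` insert None (Some ` S)" by blast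
  then show False
  proof cases
    case 1
    have Ls: "(f \<longlongrightarrow> the (L (Some s))) (at s)" if "s \<in> S" for s
    proof -
      have "L (Some s) \<noteq> None" using 1 that by force
      then obtain w where "L (Some s) = Some w" by auto
      then show ?thesis using L[of "Some s"] that by (simp add: nhx_def atx_def)
    qed
    have "L None \<noteq> None" using 1 by force
    then obtain w where "L None = Some w" by auto
    then have "(f \<longlongrightarrow> w) at_infinity" using L[of None] by (simp add: nhx_def atx_def)
    then have "f x1 = w" "f x2 = w" using liouville_ext[OF S holf Ls] nc by blast+
    with nc show False by simp
  next
    case 2
    let ?h = "\<lambda>z. inverse (f z - t)"
    have holh: "?h holomorphic_on - S"
      using ft 2 by (intro holomorphic_intros holf) force
    have key: "(?h \<longlongrightarrow> (case L x of Some w \<Rightarrow> inverse (w - t) | None \<Rightarrow> 0)) (atx x)"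
      if x: "x \<in> insert None (Some ` S)" for x
    proof (cases "L x")
      case None
      then have "filterlim f at_infinity (atx x)" using L[OF x] by (simp add: nhx_def)
      then have "filterlim (\<lambda>z. f z + (- t)) at_infinity (atx x)"
        by (rule tendsto_add_filterlim_at_infinity') (rule tendsto_const)
      then have "filterlim (\<lambda>z. f z - t) at_infinity (atx x)" by simp
      then have "(?h \<longlongrightarrow> 0) (atx x)" by (rule filterlim_compose[OF tendsto_inverse_0])
      then show ?thesis using None by simp
    next
      case (Some w)
      then have fw: "(f \<longlongrightarrow> w) (atx x)" using L[OF x] by (simp add: nhx_def)
      have "w \<noteq> t" using 2 Some x by force
      then have "(?h \<longlongrightarrow> inverse (w - t)) (atx x)"
        by (intro tendsto_intros fw) simp
      then show ?thesis using Some by simp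
    qed
    have ks: "(?h \<longlongrightarrow> (case L (Some s) of Some w \<Rightarrow> inverse (w - t) | None \<Rightarrow> 0)) (at s)"
      if "s \<in> S" for s using key[of "Some s"] that by (simp add: atx_def)
    have ki: "(?h \<longlongrightarrow> (case L None of Some w \<Rightarrow> inverse (w - t) | None \<Rightarrow> 0)) at_infinity"
      using key[of None] by (simp add: atx_def)
    have "?h x1 = (case L None of Some w \<Rightarrow> inverse (w - t) | None \<Rightarrow> 0)"
         "?h x2 = (case L None of Some w \<Rightarrow> inverse (w - t) | None \<Rightarrow> 0)"
      using liouville_ext[OF S holh ks ki] nc by auto
    then have "inverse (f x1 - t) = inverse (f x2 - t)" by simp
    then show False using nc by simp
  qed
qed

lemma card_hat: "finite S \<Longrightarrow> card (insert None (Some ` S)) = Suc (card S)"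
  by (simp add: card_image)

lemma exists_limits:
  fixes S :: "complex set"
  assumes S: "finite S" and ab: "a \<noteq> b" and holf: "f holomorphic_on (- S)"
    and om: "\<And>w. w \<in> - S \<Longrightarrow> f w \<noteq> a \<and> f w \<noteq> b"
  obtains L where "\<And>x. x \<in> insert None (Some ` S) \<Longrightarrow> filterlim f (nhx (L x)) (atx x)"
proof -
  have "\<forall>x\<in>insert None (Some ` S). \<exists>y. filterlim f (nhx y) (atx x)"
    using picard_ext_limit[OF S ab holf om] by blast
  then obtain L where "\<forall>x\<in>insert None (Some ` S). filterlim f (nhx (L x)) (atx x)"
    by metis
  then show ?thesis using that by blast
qed

lemma two_elems:
  assumes "2 \<le> card T" obtains a b where "a \<in> T" "b \<in> T" "a \<noteq> b"
proof -
  have "finite T" "T \<noteq> {}" using assms by (auto intro: card_ge_0_finite)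
  then obtain a where a: "a \<in> T" by auto
  have "card (T - {a}) \<ge> 1" using assms a \<open>finite T\<close> by (simp add: card_Diff_singleton)
  then have "T - {a} \<noteq> {}" by (metis card.empty not_one_le_zero)
  then obtain b where "b \<in> T - {a}" by blast
  then show ?thesis using that a by auto
qed

lemma hom_const:
  fixes S T :: "complex set"
  assumes S: "finite S" and T: "finite T" and card: "card S < card T" and T2: "2 \<le> card T"
    and holf: "f holomorphic_on (- S)" and ft: "\<And>z. z \<in> - S \<Longrightarrow> f z \<notin> T"
    and x1: "x1 \<in> - S" and x2: "x2 \<in> - S"
  shows "f x1 = f x2"
proof (rule ccontr)
  assume ne: "f x1 \<noteq> f x2"
  obtain a b where ab: "a \<in> T" "b \<in> T" "a \<noteq> b" using two_elems[OF T2] by blast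
  obtain L where L: "\<And>x. x \<in> insert None (Some ` S) \<Longrightarrow> filterlim f (nhx (L x)) (atx x)"
    using exists_limits[OF S ab(3) holf] ft ab by metis
  have "insert None (Some ` T) \<subseteq> L ` insert None (Some ` S)"
    by (rule limits_surj[OF S holf ft L x1 x2 ne])
  then have "card (insert None (Some ` T)) \<le> card (L ` insert None (Some ` S))"
    by (rule card_mono[rotated]) (use S in simp)
  also have "\<dots> \<le> card (insert None (Some ` S))" by (rule card_image_le) (use S in simp)
  finally show False using card S T by (simp add: card_hat card_image)
qed

lemma single_root_form:
  fixes p :: "complex poly"
  assumes pr: "poly p r = t" and only: "\<And>z. poly p z = t \<Longrightarrow> z = r"
      and nc: "poly p y \<noteq> t"
  shows "\<exists>c k. c \<noteq> 0 \<and> (\<forall>z. poly p z = t + c * (z - r) ^ k)"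
proof -
  define q where "q = p - [:t:]"
  have q0: "q \<noteq> 0" using nc by (auto simp: q_def)
  obtain u where qu: "q = [:- r, 1:] ^ order r q * u" and nd: "\<not> [:- r, 1:] dvd u"
    using order_decomp[OF q0] by blast
  have noroot: "poly u z \<noteq> 0" for z
  proof
    assume "poly u z = 0"
    then have "poly q z = 0" by (subst qu) simp
    then have "poly p z = t" by (simp add: q_def)
    then have "z = r" by (rule only)
    with \<open>poly u z = 0\<close> have "[:- r, 1:] dvd u" by (simp add: poly_eq_0_iff_dvd)
    with nd show False by simp
  qed
  have "constant (poly u)"
    using fundamental_theorem_of_algebra noroot by blast
  then have uc: "poly u z = poly u 0" for z by (simp add: constant_def)
  show ?thesis
  proof (intro exI conjI allI)
    show "poly u 0 \<noteq> 0" by (rule noroot)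
    fix z
    have "poly q z = (z - r) ^ order r q * poly u 0"
      by (subst qu) (simp add: uc[of z])
    then show "poly p z = t + poly u 0 * (z - r) ^ order r q"
      by (simp add: q_def algebra_simps)
  qed
qed

lemma two_single_roots_affine:
  fixes p :: "complex poly"
  assumes t12: "t1 \<noteq> t2"
    and p1: "poly p r1 = t1" and o1: "\<And>z. poly p z = t1 \<Longrightarrow> z = r1"
    and p2: "poly p r2 = t2" and o2: "\<And>z. poly p z = t2 \<Longrightarrow> z = r2"
  shows "\<exists>c. c \<noteq> 0 \<and> (\<forall>z. poly p z = t1 + c * (z - r1))"
proof -
  obtain c1 k1 where c1: "c1 \<noteq> 0" and f1: "\<And>z. poly p z = t1 + c1 * (z - r1) ^ k1"
    using single_root_form[OF p1 o1, of r2] p2 t12 by blast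
  obtain c2 k2 where c2: "c2 \<noteq> 0" and f2: "\<And>z. poly p z = t2 + c2 * (z - r2) ^ k2"
    using single_root_form[OF p2 o2, of r1] p1 t12 by blast
  have r12: "r1 \<noteq> r2" using p1 p2 t12 by auto
  have k1: "k1 \<noteq> 0" using f1[of r1] p1 c1 by (cases k1) auto
  have k2: "k2 \<noteq> 0" using f2[of r2] p2 c2 by (cases k2) auto
  have "k1 = 1"
  proof (rule ccontr)
    assume "k1 \<noteq> 1"
    with k1 have k1ge: "k1 \<ge> 2" by simp
    have d1: "((\<lambda>z. t1 + c1 * (z - r1) ^ k1) has_field_derivative c1 * (of_nat k1 * (r1 - r1) ^ (k1 - 1))) (at r1)"
      by (auto intro!: derivative_eq_intros)
    have d2: "((\<lambda>z. t2 + c2 * (z - r2) ^ k2) has_field_derivative c2 * (of_nat k2 * (r1 - r2) ^ (k2 - 1))) (at r1)"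
      by (auto intro!: derivative_eq_intros)
    have eq: "(\<lambda>z. t1 + c1 * (z - r1) ^ k1) = (\<lambda>z. t2 + c2 * (z - r2) ^ k2)"
      using f1 f2 by (metis)
    have "c1 * (of_nat k1 * (r1 - r1) ^ (k1 - 1)) = c2 * (of_nat k2 * (r1 - r2) ^ (k2 - 1))"
      using DERIV_unique[OF d1 d2[folded eq]] .
    moreover have "c1 * (of_nat k1 * (r1 - r1) ^ (k1 - 1)) = 0" using k1ge by simp
    moreover have "c2 * (of_nat k2 * (r1 - r2) ^ (k2 - 1)) \<noteq> 0" using c2 k2 r12 by simp
    ultimately show False by simp
  qed
  then show ?thesis using c1 f1 by auto
qed


lemma self_map_cases:
  fixes S :: "complex set"
  assumes S: "finite S" and S3: "3 \<le> card S"
    and holf: "f holomorphic_on (- S)" and fs: "\<And>z. z \<in> - S \<Longrightarrow> f z \<notin> S"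
    and nc: "x1 \<in> - S" "x2 \<in> - S" "f x1 \<noteq> f x2"
  shows "(\<exists>\<alpha> \<beta>. \<alpha> \<noteq> 0 \<and> (\<forall>z\<in>- S. f z = \<alpha> * z + \<beta>) \<and> (\<forall>s\<in>S. \<alpha> * s + \<beta> \<in> S))
       \<or> (\<exists>p\<in>S. \<exists>s0\<in>S. \<exists>k. \<forall>q\<in>S - {p}. \<exists>w\<in>S - {s0}. (w - s0) * (q - p) = k)"
proof -
  let ?H = "insert None (Some ` S)"
  have S2: "2 \<le> card S" using S3 by simp
  obtain a b where ab: "a \<in> S" "b \<in> S" "a \<noteq> b" using two_elems[OF S2] by blast
  have om: "\<And>w. w \<in> - S \<Longrightarrow> f w \<noteq> a \<and> f w \<noteq> b" using fs ab by blast
  obtain L where L: "\<And>x. x \<in> ?H \<Longrightarrow> filterlim f (nhx (L x)) (atx x)"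
    using exists_limits[OF S ab(3) holf om] by blast
  have sub: "?H \<subseteq> L ` ?H" by (rule limits_surj[OF S holf fs L nc])
  have fin: "finite ?H" using S by simp
  have c1: "card (L ` ?H) \<le> card ?H" by (rule card_image_le[OF fin])
  have c2: "card ?H \<le> card (L ` ?H)" by (rule card_mono[OF finite_imageI[OF fin] sub])
  have img: "L ` ?H = ?H"
  proof -
    have "card ?H = card (L ` ?H)" using c1 c2 by linarith
    then have "?H = L ` ?H" by (rule card_subset_eq[OF finite_imageI[OF fin] sub])
    then show ?thesis by (rule sym)
  qed
  have inj: "inj_on L ?H"
  proof -
    have "card (L ` ?H) = card ?H" using c1 c2 by linarith
    then show ?thesis by (rule eq_card_imp_inj_on[OF fin])
  qed
  have LH: "L x \<in> ?H" if "x \<in> ?H" for x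
  proof -
    have "L x \<in> L ` ?H" using that by (rule imageI)
    then show ?thesis unfolding img .
  qed
  have Linj: "x = y" if "x \<in> ?H" "y \<in> ?H" "L x = L y" for x y
    using inj that unfolding inj_on_def by blast
  have Lsurj: "\<exists>x\<in>?H. L x = y" if "y \<in> ?H" for y
  proof -
    have "y \<in> L ` ?H" unfolding img by (rule that)
    then show ?thesis by blast
  qed
  show ?thesis
  proof (cases "L None")
    case None
    define v where "v s = the (L (Some s))" for s
    have vS: "L (Some s) = Some (v s) \<and> v s \<in> S" if s: "s \<in> S" for s
    proof -
      have "L (Some s) \<noteq> None" using Linj[of "Some s" None] None s by auto
      then show ?thesis using LH[of "Some s"] s by (auto simp: v_def)
    qed
    have lims: "(f \<longlongrightarrow> v s) (at s)" if "s \<in> S" for s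
      using L[of "Some s"] vS[OF that] that by (simp add: nhx_def atx_def)
    have limi: "filterlim f at_infinity at_infinity"
      using L[of None] None by (simp add: nhx_def atx_def)
    obtain P where P1: "\<And>z. z \<in> - S \<Longrightarrow> f z = poly P z" and P2: "\<And>s. s \<in> S \<Longrightarrow> poly P s = v s"
      using poly_ext[OF S holf lims limi] by blast
    have pre: "\<exists>r\<in>S. L (Some r) = Some t" if t: "t \<in> S" for t
    proof -
      obtain x where x: "x \<in> ?H" "L x = Some t" using Lsurj[of "Some t"] t by auto
      then have "x \<noteq> None" using None by auto
      then show ?thesis using x by auto
    qed
    obtain r1 where r1: "r1 \<in> S" "L (Some r1) = Some a" using pre[OF ab(1)] by blast
    obtain r2 where r2: "r2 \<in> S" "L (Some r2) = Some b" using pre[OF ab(2)] by blast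
    have root: "z = r" if "poly P z = t" "r \<in> S" "L (Some r) = Some t" "t \<in> S" for z r t
    proof (cases "z \<in> S")
      case False
      then show ?thesis using P1[of z] that fs[of z] by auto
    next
      case True
      then have "v z = t" using P2 that by simp
      then have "L (Some z) = L (Some r)" using vS[OF True] that by simp
      then show ?thesis using Linj True that by blast
    qed
    have pr1: "poly P r1 = a" using P2 r1 vS by force
    have pr2: "poly P r2 = b" using P2 r2 vS by force
    obtain c where c: "c \<noteq> 0" "\<And>z. poly P z = a + c * (z - r1)"
      using two_single_roots_affine[OF ab(3) pr1 _ pr2] root r1 r2 ab by blast
    show ?thesis
    proof (rule disjI1, intro exI conjI ballI)
      show "c \<noteq> 0" by fact
      show "f z = c * z + (a - c * r1)" if "z \<in> - S" for z
        using P1[OF that] c by (simp add: algebra_simps)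
      show "c * s + (a - c * r1) \<in> S" if "s \<in> S" for s
        using P2[OF that] c(2)[of s] vS[OF that] by (simp add: algebra_simps)
    qed
  next
    case (Some s0)
    have s0: "s0 \<in> S" using LH[of None] Some by auto
    obtain p where p: "p \<in> S" "L (Some p) = None"
    proof -
      obtain x where x: "x \<in> ?H" "L x = None" using Lsurj[of None] by auto
      then have "x \<noteq> None" using Some by auto
      then show ?thesis using x that by auto
    qed
    define v where "v s = the (L (Some s))" for s
    have vS: "L (Some s) = Some (v s) \<and> v s \<in> S \<and> v s \<noteq> s0" if s: "s \<in> S" "s \<noteq> p" for s
    proof -
      have "L (Some s) \<noteq> None" using Linj[of "Some s" "Some p"] p s by auto
      moreover have "L (Some s) \<noteq> Some s0" using Linj[of "Some s" None] Some s by auto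
      ultimately show ?thesis using LH[of "Some s"] s by (auto simp: v_def)
    qed
    let ?k = "\<lambda>z. inverse (f z - s0)"
    define u where "u s = (if s = p then 0 else inverse (v s - s0))" for s
    have holk: "?k holomorphic_on - S"
      using fs s0 by (intro holomorphic_intros holf) force
    have limk: "(?k \<longlongrightarrow> u s) (at s)" if s: "s \<in> S" for s
    proof (cases "s = p")
      case True
      then have "filterlim f at_infinity (at s)" using L[of "Some s"] p by (simp add: nhx_def atx_def)
      then have "filterlim (\<lambda>z. f z + (- s0)) at_infinity (at s)"
        by (rule tendsto_add_filterlim_at_infinity') (rule tendsto_const)
      then have "filterlim (\<lambda>z. f z - s0) at_infinity (at s)" by simp
      then have "(?k \<longlongrightarrow> 0) (at s)" by (rule filterlim_compose[OF tendsto_inverse_0])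
      then show ?thesis using True by (simp add: u_def)
    next
      case False
      then have fw: "(f \<longlongrightarrow> v s) (at s)" using L[of "Some s"] vS[OF s False] s by (simp add: nhx_def atx_def)
      have "v s - s0 \<noteq> 0" using vS[OF s False] by simp
      then have "(?k \<longlongrightarrow> inverse (v s - s0)) (at s)"
        by (intro tendsto_intros fw)
      then show ?thesis using False by (simp add: u_def)
    qed
    have limki: "filterlim ?k at_infinity at_infinity"
    proof -
      have "(f \<longlongrightarrow> s0) at_infinity" using L[of None] Some by (simp add: nhx_def atx_def)
      then have t0: "((\<lambda>z. f z - s0) \<longlongrightarrow> 0) at_infinity"
        by (metis Lim_null)
      have "eventually (\<lambda>z. f z - s0 \<noteq> 0) at_infinity"
        using ev_notin_at_infinity[OF S] by eventually_elim (use fs s0 in force)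
      then have "filterlim (\<lambda>z. f z - s0) (at 0) at_infinity"
        by (intro filterlim_atI t0)
      then have "filterlim (\<lambda>z. inverse (?k z)) (at 0) at_infinity" by simp
      then show ?thesis by (simp only: filterlim_inverse_at_iff)
    qed
    obtain P where P1: "\<And>z. z \<in> - S \<Longrightarrow> ?k z = poly P z" and P2: "\<And>s. s \<in> S \<Longrightarrow> poly P s = u s"
      using poly_ext[OF S holk limk limki] by blast
    have "2 \<le> card (S - {s0})" using S3 s0 S by (simp add: card_Diff_singleton)
    then obtain t1 t2 where t: "t1 \<in> S - {s0}" "t2 \<in> S - {s0}" "t1 \<noteq> t2" using two_elems by blast
    have pre: "\<exists>r\<in>S - {p}. L (Some r) = Some t" if t: "t \<in> S - {s0}" for t
    proof -
      obtain x where x: "x \<in> ?H" "L x = Some t" using Lsurj[of "Some t"] t by auto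
      then have "x \<noteq> None" using Some t by auto
      then show ?thesis using x p by auto
    qed
    obtain r1 where r1: "r1 \<in> S - {p}" "L (Some r1) = Some t1" using pre[OF t(1)] by blast
    obtain r2 where r2: "r2 \<in> S - {p}" "L (Some r2) = Some t2" using pre[OF t(2)] by blast
    have vr: "v r = t" if "r \<in> S - {p}" "L (Some r) = Some t" for r t
      using vS[of r] that by auto
    have root: "z = r" if "poly P z = inverse (t - s0)" "r \<in> S - {p}" "L (Some r) = Some t" "t \<in> S - {s0}" for z r t
    proof (cases "z \<in> S")
      case False
      then have "inverse (f z - s0) = inverse (t - s0)" using P1[of z] that by simp
      then have "f z = t" by simp
      then show ?thesis using fs[of z] False that by auto
    next
      case True
      show ?thesis
      proof (cases "z = p")
        case True
        then have "inverse (t - s0) = 0" using P2[of p] p that by (simp add: u_def)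
        then show ?thesis using that by simp
      next
        case False
        then have "inverse (v z - s0) = inverse (t - s0)" using P2[of z] True that by (simp add: u_def)
        then have "v z = t" by simp
        then have "L (Some z) = L (Some r)" using vS[OF True False] that by simp
        then show ?thesis using Linj True that by blast
      qed
    qed
    have pr1: "poly P r1 = inverse (t1 - s0)" using P2[of r1] r1 vr[OF r1] by (simp add: u_def)
    have pr2: "poly P r2 = inverse (t2 - s0)" using P2[of r2] r2 vr[OF r2] by (simp add: u_def)
    have u12: "inverse (t1 - s0) \<noteq> inverse (t2 - s0)" using t by simp
    obtain c where c: "c \<noteq> 0" "\<And>z. poly P z = inverse (t1 - s0) + c * (z - r1)"
      using two_single_roots_affine[OF u12 pr1 _ pr2] root r1 r2 t by blast
    have pp: "inverse (t1 - s0) + c * (p - r1) = 0" using P2[OF p(1)] c(2)[of p] by (simp add: u_def)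
    have "\<forall>q\<in>S - {p}. \<exists>w\<in>S - {s0}. (w - s0) * (q - p) = inverse c"
    proof
      fix q assume q: "q \<in> S - {p}"
      have "inverse (v q - s0) = inverse (t1 - s0) + c * (q - r1)"
        using P2[of q] c(2)[of q] q by (simp add: u_def)
      also have "\<dots> = c * (q - p)" using pp by (simp add: algebra_simps)
      finally have eq: "inverse (v q - s0) = c * (q - p)" .
      have ne: "v q - s0 \<noteq> 0" using vS[of q] q by auto
      have "(v q - s0) * (q - p) = inverse c"
        using eq ne c(1) by (simp add: field_simps)
      moreover have "v q \<in> S - {s0}" using vS[of q] q by auto
      ultimately show "\<exists>w\<in>S - {s0}. (w - s0) * (q - p) = inverse c" by blast
    qed
    then show ?thesis using p(1) s0 by blast
  qed
qed

definition DS :: "complex set \<Rightarrow> (complex^'n) set" where "DS S = {z. \<forall>i. z$i \<notin> S}"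
definition upd :: "complex^'n \<Rightarrow> 'n \<Rightarrow> complex \<Rightarrow> complex^'n" where
  "upd z j x = (\<chi> k. if k = j then x else z$k)"

lemma upd_nth[simp]: "upd z j x $ k = (if k = j then x else z$k)" by (simp add: upd_def)
lemma upd_same[simp]: "upd z j (z$j) = z" by (simp add: vec_eq_iff)
lemma DS_iff: "z \<in> DS S \<longleftrightarrow> (\<forall>i. z$i \<notin> S)" by (simp add: DS_def)
lemma upd_in_DS: "z \<in> DS S \<Longrightarrow> x \<notin> S \<Longrightarrow> upd z j x \<in> DS S" by (simp add: DS_def)

lemma open_DS:
  assumes "finite S" shows "open (DS S :: (complex^'n) set)"
proof -
  have "(DS S :: (complex^'n) set) = (\<Inter>i\<in>UNIV. (\<lambda>z::complex^'n. z$i) -` (- S))" by (auto simp: DS_def)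
  moreover have "open (- S)" using assms by (intro open_Compl finite_imp_closed)
  ultimately show ?thesis by (auto intro!: open_INT open_vimage_vec_nth)
qed

lemma path_connected_DS:
  assumes S: "finite S" shows "path_connected (DS S :: (complex^'n) set)"
proof -
  have pc: "path_connected (- S)"
    by (rule path_connected_complement_countable) (simp_all add: S countable_finite)
  show ?thesis unfolding path_connected_def
  proof (intro ballI)
    fix z w :: "complex^'n" assume z: "z \<in> DS S" and w: "w \<in> DS S"
    have "\<forall>i. \<exists>g. path g \<and> path_image g \<subseteq> - S \<and> pathstart g = z$i \<and> pathfinish g = w$i"
      using pc z w unfolding path_connected_def DS_def by auto
    then obtain \<gamma> where \<gamma>: "\<And>i. path (\<gamma> i) \<and> path_image (\<gamma> i) \<subseteq> - S \<and> pathstart (\<gamma> i) = z$i \<and> pathfinish (\<gamma> i) = w$i"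
      by metis
    define G where "G t = ((\<chi> i. \<gamma> i t) :: complex^'n)" for t
    have "path G" unfolding path_def G_def
      by (intro continuous_on_vec_lambda) (use \<gamma> in \<open>auto simp: path_def\<close>)
    moreover have "path_image G \<subseteq> DS S"
      using \<gamma> by (fastforce simp: path_image_def G_def DS_def)
    moreover have "pathstart G = z" "pathfinish G = w"
      using \<gamma> by (auto simp: pathstart_def pathfinish_def G_def vec_eq_iff)
    ultimately show "\<exists>g. path g \<and> path_image g \<subseteq> DS S \<and> pathstart g = z \<and> pathfinish g = w"
      by blast
  qed
qed

lemma big_point_DS:
  fixes S :: "complex set"
  assumes S: "finite S"
  obtains C where "\<And>r. r > C \<Longrightarrow> (\<chi> i. complex_of_real r) \<in> (DS S :: (complex^'n) set)"
proof -
  obtain C where C: "\<And>s. s \<in> S \<Longrightarrow> norm s \<le> C"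
    using finite_imp_bounded[OF S] bounded_iff by blast
  have "(\<chi> i. complex_of_real r) \<in> (DS S :: (complex^'n) set)" if "r > C" for r
  proof -
    have "complex_of_real r \<notin> S"
    proof
      assume "complex_of_real r \<in> S"
      then have "norm (complex_of_real r) \<le> C" by (rule C)
      then show False using that by simp
    qed
    then show ?thesis by (simp add: DS_def)
  qed
  then show ?thesis using that by blast
qed

lemma unbounded_DS:
  fixes S :: "complex set"
  assumes S: "finite S" shows "\<not> bounded (DS S :: (complex^'n) set)"
proof
  assume "bounded (DS S :: (complex^'n) set)"
  then obtain B where B: "\<And>x. x \<in> (DS S :: (complex^'n) set) \<Longrightarrow> norm x \<le> B"
    unfolding bounded_iff by blast
  obtain C where C: "\<And>r. r > C \<Longrightarrow> (\<chi> i. complex_of_real r) \<in> (DS S :: (complex^'n) set)"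
    using big_point_DS[OF S] by blast
  define r where "r = max (max B C) 0 + 1"
  have "r > C" "r > B" "r > 0" unfolding r_def by auto
  then have in1: "(\<chi> i. complex_of_real r) \<in> (DS S :: (complex^'n) set)" using C by blast
  have "norm ((\<chi> i. complex_of_real r) $ (undefined::'n)) \<le> norm (\<chi> i. complex_of_real r :: complex^'n)"
    by (rule Finite_Cartesian_Product.norm_nth_le)
  then have "r \<le> norm (\<chi> i. complex_of_real r :: complex^'n)" using \<open>r > 0\<close> by simp
  with B[OF in1] \<open>r > B\<close> show False by simp
qed

lemma two_points_DS:
  fixes S :: "complex set"
  assumes S: "finite S" obtains z1 z2 :: "complex^'n" where "z1 \<in> DS S" "z2 \<in> DS S" "z1 \<noteq> z2"
proof -
  obtain C where C: "\<And>r. r > C \<Longrightarrow> (\<chi> i. complex_of_real r) \<in> (DS S :: (complex^'n) set)"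
    using big_point_DS[OF S] by blast
  have "(\<chi> i. complex_of_real (C + 1)) \<noteq> (\<chi> i. complex_of_real (C + 2) :: complex^'n)"
    by (simp add: vec_eq_iff)
  then show ?thesis using that C[of "C+1"] C[of "C+2"] by simp
qed

lemma cont_holo: "holo_on F D \<Longrightarrow> continuous_on D F"
  unfolding holo_on_def
  by (intro continuous_at_imp_continuous_on) (blast intro: has_derivative_continuous)

lemma slice_holo:
  fixes F :: "complex^'n \<Rightarrow> complex^'m"
  assumes holo: "holo_on F D" and sub: "\<And>x. x \<in> X \<Longrightarrow> upd z j x \<in> D" and X: "open X"
  shows "(\<lambda>x. F (upd z j x) $ i) holomorphic_on X"
  unfolding holomorphic_on_open[OF X]
proof
  fix x assume x: "x \<in> X"
  obtain L where L: "(F has_derivative L) (at (upd z j x))" and lin: "Vector_Spaces.linear (*s) (*s) L"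
    using holo sub[OF x] unfolding holo_on_def by blast
  define A where "A h = upd (0::complex^'n) j h" for h
  have linA: "linear A"
    by (rule linearI) (auto simp: A_def vec_eq_iff)
  have blA: "bounded_linear A" using linA by (simp add: linear_conv_bounded_linear)
  have eqA: "upd z j = (\<lambda>y. A y + upd z j 0)"
    by (auto simp: A_def vec_eq_iff)
  have dA0: "((\<lambda>y. A y + upd z j 0) has_derivative A) (at x)"
    by (intro has_derivative_add_const bounded_linear.has_derivative[OF blA] has_derivative_ident)
  have dA: "(upd z j has_derivative A) (at x)"
    by (subst eqA) (rule dA0)
  have "((\<lambda>y. F (upd z j y)) has_derivative (\<lambda>h. L (A h))) (at x)"
    using has_derivative_compose[OF dA L] by simp
  then have d: "((\<lambda>y. F (upd z j y) $ i) has_derivative (\<lambda>h. L (A h) $ i)) (at x)"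
    by (rule bounded_linear.has_derivative[OF bounded_linear_vec_nth])
  have sc: "L (c *s v) = c *s L v" for c v using lin by (simp add: Vector_Spaces.linear_iff)
  have Ah: "A h = h *s A 1" for h by (auto simp: A_def vec_eq_iff)
  have "L (A h) $ i = L (A 1) $ i * h" for h
  proof -
    have "L (A h) = L (h *s A 1)" by (rule arg_cong[where f=L]) (rule Ah)
    also have "\<dots> = h *s L (A 1)" by (rule sc)
    finally show ?thesis by simp
  qed
  then have "(\<lambda>h. L (A h) $ i) = (\<lambda>h. L (A 1) $ i * h)" by (rule ext)
  with d show "\<exists>f'. ((\<lambda>x. F (upd z j x) $ i) has_field_derivative f') (at x)"
    unfolding has_field_derivative_def by auto
qed

definition rigid :: "complex set \<Rightarrow> bool" where
  "rigid S \<longleftrightarrow> (\<forall>f. f holomorphic_on - S \<and> (\<forall>z\<in>- S. f z \<notin> S) \<longrightarrow>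
      (\<exists>c. \<forall>x\<in>- S. f x = c) \<or> (\<forall>x\<in>- S. f x = x))"

definition mix :: "complex^'n \<Rightarrow> complex^'n \<Rightarrow> 'n set \<Rightarrow> complex^'n" where
  "mix z w A = (\<chi> k. if k \<in> A then w$k else z$k)"

lemma const_of_slices:
  fixes g :: "complex^'n \<Rightarrow> 'b"
  assumes sl: "\<And>z j x. z \<in> DS S \<Longrightarrow> x \<notin> S \<Longrightarrow> g (upd z j x) = g z"
    and z: "z \<in> DS S" and w: "w \<in> DS S"
  shows "g w = g z"
proof -
  have "finite A \<Longrightarrow> mix z w A \<in> DS S \<and> g (mix z w A) = g z" for A
  proof (induction A rule: finite_induct)
    case empty
    have "mix z w {} = z" by (simp add: mix_def vec_eq_iff)
    then show ?case using z by simp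
  next
    case (insert j A)
    have eq: "mix z w (insert j A) = upd (mix z w A) j (w$j)"
      by (auto simp: mix_def vec_eq_iff)
    have wj: "w$j \<notin> S" using w by (simp add: DS_def)
    have m: "mix z w A \<in> DS S" using insert.IH by simp
    show ?case
      unfolding eq using insert.IH upd_in_DS[OF m wj] sl[OF m wj] by simp
  qed
  from this[of UNIV] have "g (mix z w UNIV) = g z" by simp
  moreover have "mix z w UNIV = w" by (simp add: mix_def vec_eq_iff)
  ultimately show ?thesis by simp
qed

lemma two_outside:
  fixes S :: "complex set"
  assumes "finite S" obtains a b where "a \<notin> S" "b \<notin> S" "a \<noteq> b"
proof -
  obtain a where a: "a \<notin> S" using ex_new_if_finite[OF infinite_UNIV_char_0 assms] by blast
  obtain b where b: "b \<notin> insert a S"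
    using ex_new_if_finite[OF infinite_UNIV_char_0, of "insert a S"] assms by blast
  show ?thesis using that a b by blast
qed

lemma cont_upd: fixes A :: "(complex^'n) set" shows "continuous_on A (\<lambda>z. upd z j x)"
  unfolding upd_def
proof (intro continuous_on_vec_lambda)
  fix k
  show "continuous_on A (\<lambda>z::complex^'n. if k = j then x else z $ k)"
    by (cases "k = j") (auto intro: continuous_intros)
qed

lemma comp_class:
  fixes g :: "complex^'n \<Rightarrow> complex"
  assumes S: "finite S" and cont: "continuous_on (DS S) g"
    and sl: "\<And>z j. z \<in> DS S \<Longrightarrow> (\<forall>x. x \<notin> S \<longrightarrow> g (upd z j x) = g z) \<or> (\<forall>x. x \<notin> S \<longrightarrow> g (upd z j x) = x)"
  shows "(\<forall>z\<in>DS S. \<forall>w\<in>DS S. g w = g z) \<or> (\<exists>j. \<forall>z\<in>DS S. g z = z$j)"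
proof -
  let ?D = "DS S :: (complex^'n) set"
  obtain a b where ab: "a \<notin> S" "b \<notin> S" "a \<noteq> b" using two_outside[OF S] by blast
  have conn: "connected ?D" by (rule path_connected_imp_connected[OF path_connected_DS[OF S]])
  define I where "I j = {z\<in>?D. \<forall>x\<in>- S. g (upd z j x) = x}" for j
  define C where "C j = {z\<in>?D. \<forall>x\<in>- S. g (upd z j x) = g z}" for j
  have contx: "continuous_on ?D (\<lambda>z. g (upd z j x))" if "x \<notin> S" for j x
    by (rule continuous_on_compose2[OF cont cont_upd]) (use that upd_in_DS in blast)
  have nS: "- S \<noteq> {}" using ab by blast
  have clI: "closedin (top_of_set ?D) (I j)" for j
  proof -
    have "I j = (\<Inter>x\<in>- S. {z\<in>?D. g (upd z j x) = x})" using nS by (auto simp: I_def)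
    moreover have "closedin (top_of_set ?D) {z\<in>?D. g (upd z j x) = x}" if "x \<in> - S" for x
      using continuous_closedin_preimage_constant[OF contx] that by simp
    ultimately show ?thesis using nS by (metis (no_types, lifting) ComplD closedin_INT)
  qed
  have clC: "closedin (top_of_set ?D) (C j)" for j
  proof -
    have "C j = (\<Inter>x\<in>- S. {z\<in>?D. g (upd z j x) - g z = 0})" using nS by (auto simp: C_def)
    moreover have "closedin (top_of_set ?D) {z\<in>?D. g (upd z j x) - g z = 0}" if "x \<in> - S" for x
    proof -
      have "continuous_on ?D (\<lambda>z. g (upd z j x) - g z)"
        using contx[of x] cont that by (intro continuous_intros) auto
      then show ?thesis using continuous_closedin_preimage_constant by blast
    qed
    ultimately show ?thesis using nS by (metis (no_types, lifting) closedin_INT)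
  qed
  have un: "I j \<union> C j = ?D" for j
  proof
    show "I j \<union> C j \<subseteq> ?D" by (auto simp: I_def C_def)
    show "?D \<subseteq> I j \<union> C j"
    proof
      fix z assume z: "z \<in> ?D"
      from sl[OF z, of j] show "z \<in> I j \<union> C j"
        using z by (auto simp: I_def C_def)
    qed
  qed
  have dis: "I j \<inter> C j = {}" for j
  proof (rule ccontr)
    assume "I j \<inter> C j \<noteq> {}"
    then obtain z where "z \<in> I j" "z \<in> C j" by blast
    then have "\<forall>x\<in>- S. x = g z" by (auto simp: I_def C_def)
    then have "a = g z" "b = g z" using ab(1,2) by (metis ComplI)+
    with ab show False by simp
  qed
  have IC: "I j = {} \<or> C j = {}" for j
    using conn[unfolded connected_closedin_eq] clI[of j] clC[of j] un[of j] dis[of j] by blast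
  show ?thesis
  proof (cases "\<exists>j. C j = {}")
    case True
    then obtain j where "C j = {}" by blast
    then have "I j = ?D" using un[of j] by simp
    then have "g z = z$j" if "z \<in> ?D" for z
    proof -
      have "z \<in> I j" using \<open>I j = ?D\<close> that by simp
      moreover have "z$j \<notin> S" using that by (simp add: DS_def)
      ultimately show ?thesis unfolding I_def by (metis (mono_tags, lifting) ComplI mem_Collect_eq upd_same)
    qed
    then show ?thesis by blast
  next
    case False
    then have "C j = ?D" for j using IC[of j] un[of j] by auto
    then have "g (upd z j x) = g z" if "z \<in> ?D" "x \<notin> S" for z j x
      using that unfolding C_def by blast
    then show ?thesis using const_of_slices[of S g] by blast
  qed
qed

lemma End_comp:
  fixes F :: "complex^'n \<Rightarrow> complex^'n"
  assumes S: "finite S" and rig: "rigid S" and holo: "holo_on F (DS S)" and into: "\<And>z. z \<in> DS S \<Longrightarrow> F z \<in> DS S"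
  shows "(\<forall>z\<in>DS S. \<forall>w\<in>DS S. F w $ i = F z $ i) \<or> (\<exists>j. \<forall>z\<in>DS S. F z $ i = z$j)"
proof (rule comp_class[OF S])
  show "continuous_on (DS S) (\<lambda>z. F z $ i)"
    using cont_holo[OF holo] by (intro continuous_intros)
  fix z :: "complex^'n" and j assume z: "z \<in> DS S"
  let ?h = "\<lambda>x. F (upd z j x) $ i"
  have hol: "?h holomorphic_on - S"
    by (rule slice_holo[OF holo]) (use z upd_in_DS S in \<open>auto intro: open_Compl finite_imp_closed\<close>)
  have maps: "\<forall>x\<in>- S. ?h x \<notin> S"
    using into upd_in_DS[OF z] by (auto simp: DS_def)
  from rig hol maps have "(\<exists>c. \<forall>x\<in>- S. ?h x = c) \<or> (\<forall>x\<in>- S. ?h x = x)"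
    unfolding rigid_def by blast
  then show "(\<forall>x. x \<notin> S \<longrightarrow> F (upd z j x) $ i = F z $ i) \<or> (\<forall>x. x \<notin> S \<longrightarrow> F (upd z j x) $ i = x)"
  proof
    assume "\<exists>c. \<forall>x\<in>- S. ?h x = c"
    then obtain c where c: "\<And>x. x \<notin> S \<Longrightarrow> ?h x = c" by auto
    have "z$j \<notin> S" using z by (simp add: DS_def)
    from c[OF this] have "F z $ i = c" by simp
    then show ?thesis using c by auto
  qed auto
qed

lemma Hom_const_nd:
  fixes F :: "complex^'n \<Rightarrow> complex^'n"
  assumes S: "finite S" and T: "finite T" and card: "card S < card T" and T2: "2 \<le> card T"
    and holo: "holo_on F (DS S)" and into: "\<And>z. z \<in> DS S \<Longrightarrow> F z \<in> DS T"
    and z: "z \<in> DS S" and w: "w \<in> DS S"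
  shows "F w = F z"
proof -
  have "F w $ i = F z $ i" for i
  proof (rule const_of_slices[OF _ z w])
    fix y :: "complex^'n" and j x assume y: "y \<in> DS S" and x: "x \<notin> S"
    let ?h = "\<lambda>x. F (upd y j x) $ i"
    have hol: "?h holomorphic_on - S"
      by (rule slice_holo[OF holo]) (use y upd_in_DS S in \<open>auto intro: open_Compl finite_imp_closed\<close>)
    have maps: "\<And>x. x \<in> - S \<Longrightarrow> ?h x \<notin> T"
      using into upd_in_DS[OF y] by (auto simp: DS_def)
    have yj: "y$j \<in> - S" using y by (simp add: DS_def)
    show "F (upd y j x) $ i = F y $ i"
      using hom_const[OF S T card T2 hol maps, of x "y$j"] x yj by simp
  qed
  then show ?thesis by (simp add: vec_eq_iff)
qed

definition vmap :: "(complex \<Rightarrow> complex) \<Rightarrow> complex^'n \<Rightarrow> complex^'n" where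
  "vmap \<phi> z = (\<chi> i. \<phi> (z$i))"

lemma vmap_nth[simp]: "vmap \<phi> z $ i = \<phi> (z$i)" by (simp add: vmap_def)

lemma vmap_DS: "z \<in> DS S \<Longrightarrow> (\<And>x. x \<notin> S \<Longrightarrow> \<phi> x \<notin> T) \<Longrightarrow> vmap \<phi> z \<in> DS T"
  by (simp add: DS_def)

lemma vmap_inv: "z \<in> DS S \<Longrightarrow> (\<And>x. x \<notin> S \<Longrightarrow> \<psi> (\<phi> x) = x) \<Longrightarrow> vmap \<psi> (vmap \<phi> z) = z"
  by (simp add: DS_def vec_eq_iff)

lemma transport:
  fixes F :: "complex^'n \<Rightarrow> complex^'n"
  assumes S: "finite S" and T: "finite T" and rig: "rigid S" and F: "F \<in> End_holo (DS S)"
    and \<phi>: "\<And>x. x \<notin> S \<Longrightarrow> \<phi> x \<notin> T" and \<psi>: "\<And>y. y \<notin> T \<Longrightarrow> \<psi> y \<notin> S"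
    and \<phi>\<psi>: "\<And>y. y \<notin> T \<Longrightarrow> \<phi> (\<psi> y) = y"
  shows "restrict (\<lambda>y. vmap \<phi> (F (vmap \<psi> y))) (DS T) \<in> End_holo (DS T)"
proof -
  let ?D1 = "DS S :: (complex^'n) set" and ?D2 = "DS T :: (complex^'n) set"
  let ?G = "restrict (\<lambda>y. vmap \<phi> (F (vmap \<psi> y))) ?D2"
  have holo: "holo_on F ?D1" and into: "\<And>z. z \<in> ?D1 \<Longrightarrow> F z \<in> ?D1"
    using F by (auto simp: End_holo_def)
  have comp: "(\<forall>z\<in>?D1. \<forall>w\<in>?D1. F w $ i = F z $ i) \<or> (\<exists>j. \<forall>z\<in>?D1. F z $ i = z$j)" for i
    by (rule End_comp[OF S rig holo into])
  obtain z0 z1 :: "complex^'n" where z0: "z0 \<in> ?D1" using two_points_DS[OF S] by metis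
  define P where "P i = (\<forall>z\<in>?D1. \<forall>w\<in>?D1. F w $ i = F z $ i)" for i
  define jj where "jj i = (SOME j. \<forall>z\<in>?D1. F z $ i = z$j)" for i
  have jj: "\<forall>z\<in>?D1. F z $ i = z $ jj i" if "\<not> P i" for i
  proof -
    have "\<exists>j. \<forall>z\<in>?D1. F z $ i = z$j" using comp[of i] that unfolding P_def by blast
    then show ?thesis unfolding jj_def by (rule someI_ex)
  qed
  define M :: "complex^'n \<Rightarrow> complex^'n" where "M h = (\<chi> i. if P i then 0 else h $ jj i)" for h
  define b :: "complex^'n" where "b = (\<chi> i. if P i then \<phi> (F z0 $ i) else 0)"
  have vD: "vmap \<psi> y \<in> ?D1" if "y \<in> ?D2" for y using vmap_DS[OF that \<psi>] .
  have eq: "?G y = M y + b" if y: "y \<in> ?D2" for y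
  proof -
    have "vmap \<phi> (F (vmap \<psi> y)) $ i = (M y + b) $ i" for i
    proof (cases "P i")
      case True
      then have "F (vmap \<psi> y) $ i = F z0 $ i" using vD[OF y] z0 unfolding P_def by blast
      then show ?thesis using True by (simp add: M_def b_def)
    next
      case False
      then have "F (vmap \<psi> y) $ i = (vmap \<psi> y) $ jj i" using jj vD[OF y] by blast
      moreover have "y $ jj i \<notin> T" using y by (simp add: DS_def)
      ultimately show ?thesis using False \<phi>\<psi> by (simp add: M_def b_def)
    qed
    then show ?thesis using y by (simp add: vec_eq_iff)
  qed
  have linM: "linear M" by (rule linearI) (auto simp: M_def vec_eq_iff)
  have blM: "bounded_linear M" using linM by (simp add: linear_conv_bounded_linear)
  have clin: "Vector_Spaces.linear (*s) (*s) M"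
    unfolding Vector_Spaces.linear_iff
    by (auto simp: vec.vector_space_axioms M_def vec_eq_iff)
  have dM: "((\<lambda>y. M y + b) has_derivative M) (at y)" for y
    by (intro has_derivative_add_const bounded_linear.has_derivative[OF blM] has_derivative_ident)
  have "holo_on ?G ?D2"
    unfolding holo_on_def
  proof
    fix y assume y: "y \<in> ?D2"
    have "(?G has_derivative M) (at y)"
      by (rule has_derivative_transform_within_open[OF dM open_DS[OF T] y]) (metis eq)
    then show "\<exists>L. (?G has_derivative L) (at y) \<and> Vector_Spaces.linear (*s) (*s) L"
      using clin by blast
  qed
  moreover have "?G ` ?D2 \<subseteq> ?D2"
  proof
    fix x assume "x \<in> ?G ` ?D2"
    then obtain y where y: "y \<in> ?D2" and x: "x = ?G y" by blast
    have "F (vmap \<psi> y) \<in> ?D1" using into vD y by blast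
    then have "vmap \<phi> (F (vmap \<psi> y)) \<in> ?D2" using vmap_DS \<phi> by blast
    then show "x \<in> ?D2" using x y by simp
  qed
  ultimately show ?thesis by (simp add: End_holo_def)
qed

lemma iso:
  assumes S: "finite S" and T: "finite T" and rS: "rigid S" and rT: "rigid T"
    and \<phi>: "\<And>x. x \<notin> S \<Longrightarrow> \<phi> x \<notin> T" and \<psi>: "\<And>y. y \<notin> T \<Longrightarrow> \<psi> y \<notin> S"
    and \<psi>\<phi>: "\<And>x. x \<notin> S \<Longrightarrow> \<psi> (\<phi> x) = x" and \<phi>\<psi>: "\<And>y. y \<notin> T \<Longrightarrow> \<phi> (\<psi> y) = y"
  shows "semigroups_iso (DS S :: (complex^'n) set) (DS T)"
proof -
  let ?D1 = "DS S :: (complex^'n) set" and ?D2 = "DS T :: (complex^'n) set"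
  define \<Phi> where "\<Phi> F = restrict (\<lambda>y. vmap \<phi> (F (vmap \<psi> y))) ?D2" for F :: "complex^'n \<Rightarrow> complex^'n"
  define \<Psi> where "\<Psi> G = restrict (\<lambda>z. vmap \<psi> (G (vmap \<phi> z))) ?D1" for G :: "complex^'n \<Rightarrow> complex^'n"
  have \<Phi>in: "\<Phi> F \<in> End_holo ?D2" if "F \<in> End_holo ?D1" for F
    unfolding \<Phi>_def by (rule transport[OF S T rS that \<phi> \<psi> \<phi>\<psi>])
  have \<Psi>in: "\<Psi> G \<in> End_holo ?D1" if "G \<in> End_holo ?D2" for G
    unfolding \<Psi>_def by (rule transport[OF T S rT that \<psi> \<phi> \<psi>\<phi>])
  have v1: "vmap \<phi> z \<in> ?D2" if "z \<in> ?D1" for z using vmap_DS[OF that \<phi>] .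
  have v2: "vmap \<psi> y \<in> ?D1" if "y \<in> ?D2" for y using vmap_DS[OF that \<psi>] .
  have i1: "vmap \<psi> (vmap \<phi> z) = z" if "z \<in> ?D1" for z using that \<psi>\<phi> by (simp add: DS_def vec_eq_iff)
  have i2: "vmap \<phi> (vmap \<psi> y) = y" if "y \<in> ?D2" for y using that \<phi>\<psi> by (simp add: DS_def vec_eq_iff)
  have bij: "bij_betw \<Phi> (End_holo ?D1) (End_holo ?D2)"
  proof (rule bij_betwI)
    show "\<Phi> \<in> End_holo ?D1 \<rightarrow> End_holo ?D2" using \<Phi>in by blast
    show "\<Psi> \<in> End_holo ?D2 \<rightarrow> End_holo ?D1" using \<Psi>in by blast
  next
    fix F assume F: "F \<in> End_holo ?D1"
    have into: "F z \<in> ?D1" if "z \<in> ?D1" for z using F that by (auto simp: End_holo_def)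
    have ext: "F \<in> extensional ?D1" using F by (simp add: End_holo_def)
    show "\<Psi> (\<Phi> F) = F"
    proof
      fix z show "\<Psi> (\<Phi> F) z = F z"
      proof (cases "z \<in> ?D1")
        case True
        then show ?thesis by (simp add: \<Psi>_def \<Phi>_def v1 i1 into)
      next
        case False
        then show ?thesis using extensional_arb[OF ext False] by (simp add: \<Psi>_def)
      qed
    qed
  next
    fix G assume G: "G \<in> End_holo ?D2"
    have into: "G z \<in> ?D2" if "z \<in> ?D2" for z using G that by (auto simp: End_holo_def)
    have ext: "G \<in> extensional ?D2" using G by (simp add: End_holo_def)
    show "\<Phi> (\<Psi> G) = G"
    proof
      fix z show "\<Phi> (\<Psi> G) z = G z"
      proof (cases "z \<in> ?D2")
        case True
        then show ?thesis by (simp add: \<Psi>_def \<Phi>_def v2 i2 into)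
      next
        case False
        then show ?thesis using extensional_arb[OF ext False] by (simp add: \<Phi>_def)
      qed
    qed
  qed
  have hom: "\<Phi> (comp_on ?D1 F G) = comp_on ?D2 (\<Phi> F) (\<Phi> G)"
    if F: "F \<in> End_holo ?D1" and G: "G \<in> End_holo ?D1" for F G
  proof
    have intoG: "G z \<in> ?D1" if "z \<in> ?D1" for z using G that by (auto simp: End_holo_def)
    fix y show "\<Phi> (comp_on ?D1 F G) y = comp_on ?D2 (\<Phi> F) (\<Phi> G) y"
    proof (cases "y \<in> ?D2")
      case True
      have "\<Phi> G y \<in> ?D2" using \<Phi>in[OF G] True by (auto simp: End_holo_def)
      then show ?thesis using True
        by (simp add: \<Phi>_def comp_on_def v2 i1 intoG)
    next
      case False
      then show ?thesis by (simp add: \<Phi>_def comp_on_def)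
    qed
  qed
  show ?thesis unfolding semigroups_iso_def using bij hom by blast
qed

lemma rigid_of:
  fixes S :: "complex set"
  assumes S: "finite S" and S3: "3 \<le> card S"
    and aff: "\<And>\<alpha> \<beta>. \<alpha> \<noteq> 0 \<Longrightarrow> \<forall>s\<in>S. \<alpha> * s + \<beta> \<in> S \<Longrightarrow> \<alpha> = 1 \<and> \<beta> = 0"
    and mob: "\<not> (\<exists>p\<in>S. \<exists>s0\<in>S. \<exists>k. \<forall>q\<in>S - {p}. \<exists>w\<in>S - {s0}. (w - s0) * (q - p) = k)"
  shows "rigid S"
  unfolding rigid_def
proof (intro allI impI)
  fix f assume "f holomorphic_on - S \<and> (\<forall>z\<in>- S. f z \<notin> S)"
  then have hol: "f holomorphic_on - S" and fs: "\<And>z. z \<in> - S \<Longrightarrow> f z \<notin> S" by auto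
  show "(\<exists>c. \<forall>x\<in>- S. f x = c) \<or> (\<forall>x\<in>- S. f x = x)"
  proof (cases "\<exists>x1\<in>- S. \<exists>x2\<in>- S. f x1 \<noteq> f x2")
    case True
    then obtain x1 x2 where nc: "x1 \<in> - S" "x2 \<in> - S" "f x1 \<noteq> f x2" by blast
    from self_map_cases[OF S S3 hol fs nc] mob
    obtain \<alpha> \<beta> where ab: "\<alpha> \<noteq> 0" "\<forall>z\<in>- S. f z = \<alpha> * z + \<beta>" "\<forall>s\<in>S. \<alpha> * s + \<beta> \<in> S"
      by blast
    have "\<alpha> = 1 \<and> \<beta> = 0" by (rule aff[OF ab(1) ab(3)])
    then have "\<forall>x\<in>- S. f x = x" using ab(2) by simp
    then show ?thesis by (rule disjI2)
  next
    case False
    obtain a b where a: "a \<notin> S" using two_outside[OF S] by blast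
    have "\<forall>x\<in>- S. f x = f a"
    proof
      fix x assume "x \<in> - S"
      then show "f x = f a" using False a by (meson ComplI)
    qed
    then show ?thesis by blast
  qed
qed

lemma aff_S:
  fixes \<alpha> \<beta> :: complex
  assumes "\<alpha> \<noteq> 0" "\<forall>s\<in>{0,1,3,8}. \<alpha> * s + \<beta> \<in> {0,1,3,8}"
  shows "\<alpha> = 1 \<and> \<beta> = 0"
proof -
  define \<gamma> where "\<gamma> = \<alpha> + \<beta>"
  have a: "\<alpha> = \<gamma> - \<beta>" by (simp add: \<gamma>_def)
  have h: "\<beta> \<in> {0,1,3,8}" "\<gamma> \<in> {0,1,3,8}" "3*\<gamma> - 2*\<beta> \<in> {0,1,3,8}" "8*\<gamma> - 7*\<beta> \<in> {0,1,3,8}"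
    using assms(2) unfolding \<gamma>_def by (auto simp: algebra_simps)
  show ?thesis using h assms(1) unfolding a by auto
qed

lemma aff_T:
  fixes \<alpha> \<beta> :: complex
  assumes "\<alpha> \<noteq> 0" "\<forall>s\<in>{-1,0,1,3,8}. \<alpha> * s + \<beta> \<in> {-1,0,1,3,8}"
  shows "\<alpha> = 1 \<and> \<beta> = 0"
proof -
  define \<gamma> where "\<gamma> = \<alpha> + \<beta>"
  have a: "\<alpha> = \<gamma> - \<beta>" by (simp add: \<gamma>_def)
  have h1: "\<beta> \<in> {-1,0,1,3,8}" using assms(2) by (metis insertCI mult_zero_right add_0)
  have h2: "\<gamma> \<in> {-1,0,1,3,8}" using assms(2) unfolding \<gamma>_def by (metis insertCI mult_1_right)
  have h3: "3*\<gamma> - 2*\<beta> \<in> {-1,0,1,3,8}"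
  proof -
    have "\<alpha> * 3 + \<beta> \<in> {-1,0,1,3,8}" using assms(2) by blast
    moreover have "\<alpha> * 3 + \<beta> = 3*\<gamma> - 2*\<beta>" unfolding a by (simp add: algebra_simps)
    ultimately show ?thesis by metis
  qed
  have h4: "8*\<gamma> - 7*\<beta> \<in> {-1,0,1,3,8}"
  proof -
    have "\<alpha> * 8 + \<beta> \<in> {-1,0,1,3,8}" using assms(2) by blast
    moreover have "\<alpha> * 8 + \<beta> = 8*\<gamma> - 7*\<beta>" unfolding a by (simp add: algebra_simps)
    ultimately show ?thesis by metis
  qed
  have h5: "2*\<beta> - \<gamma> \<in> {-1,0,1,3,8}"
  proof -
    have "\<alpha> * -1 + \<beta> \<in> {-1,0,1,3,8}" using assms(2) by blast
    moreover have "\<alpha> * -1 + \<beta> = 2*\<beta> - \<gamma>" unfolding a by (simp add: algebra_simps)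
    ultimately show ?thesis by metis
  qed
  show ?thesis
    using h1 h2 unfolding a
    by (elim insertE emptyE) (use h3 h4 h5 assms(1) a in simp_all)
qed

lemma mob_T:
  "\<not> (\<exists>p\<in>{-1,0,1,3,8::complex}. \<exists>s0\<in>{-1,0,1,3,8::complex}. \<exists>k. \<forall>q\<in>{-1,0,1,3,8} - {p}. \<exists>w\<in>{-1,0,1,3,8} - {s0}. (w - s0) * (q - p) = k)"
proof clarify
  fix p s0 k
  assume p: "p \<in> {-1,0,1,3,8::complex}" and s0: "s0 \<in> {-1,0,1,3,8::complex}"
    and H: "\<forall>q\<in>{-1,0,1,3,8} - {p}. \<exists>w\<in>{-1,0,1,3,8} - {s0}. (w - s0) * (q - p) = k"
  have c1: False if "p = (-1::complex)" "s0 = (-1::complex)"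
    using H[rule_format, of "0"] H[rule_format, of "1"] H[rule_format, of "8"] that by (auto simp: insert_Diff_if)
  have c2: False if "p = (-1::complex)" "s0 = (0::complex)"
    using H[rule_format, of "0"] H[rule_format, of "1"] that by (auto simp: insert_Diff_if)
  have c3: False if "p = (-1::complex)" "s0 = (1::complex)"
    using H[rule_format, of "0"] H[rule_format, of "3"] that by (auto simp: insert_Diff_if)
  have c4: False if "p = (-1::complex)" "s0 = (3::complex)"
    using H[rule_format, of "0"] H[rule_format, of "3"] that by (auto simp: insert_Diff_if)
  have c5: False if "p = (-1::complex)" "s0 = (8::complex)"
    using H[rule_format, of "0"] H[rule_format, of "1"] that by (auto simp: insert_Diff_if)
  have c6: False if "p = (0::complex)" "s0 = (-1::complex)"
    using H[rule_format, of "-1"] H[rule_format, of "1"] that by (auto simp: insert_Diff_if)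
  have c7: False if "p = (0::complex)" "s0 = (0::complex)"
    using H[rule_format, of "-1"] H[rule_format, of "1"] H[rule_format, of "3"] that by (auto simp: insert_Diff_if)
  have c8: False if "p = (0::complex)" "s0 = (1::complex)"
    using H[rule_format, of "-1"] H[rule_format, of "3"] that by (auto simp: insert_Diff_if)
  have c9: False if "p = (0::complex)" "s0 = (3::complex)"
    using H[rule_format, of "-1"] H[rule_format, of "1"] that by (auto simp: insert_Diff_if)
  have c10: False if "p = (0::complex)" "s0 = (8::complex)"
    using H[rule_format, of "-1"] H[rule_format, of "1"] that by (auto simp: insert_Diff_if)
  have c11: False if "p = (1::complex)" "s0 = (-1::complex)"
    using H[rule_format, of "-1"] H[rule_format, of "3"] that by (auto simp: insert_Diff_if)
  have c12: False if "p = (1::complex)" "s0 = (0::complex)"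
    using H[rule_format, of "-1"] H[rule_format, of "0"] that by (auto simp: insert_Diff_if)
  have c13: False if "p = (1::complex)" "s0 = (1::complex)"
    using H[rule_format, of "-1"] H[rule_format, of "0"] H[rule_format, of "3"] that by (auto simp: insert_Diff_if)
  have c14: False if "p = (1::complex)" "s0 = (3::complex)"
    using H[rule_format, of "-1"] H[rule_format, of "3"] that by (auto simp: insert_Diff_if)
  have c15: False if "p = (1::complex)" "s0 = (8::complex)"
    using H[rule_format, of "-1"] H[rule_format, of "0"] that by (auto simp: insert_Diff_if)
  have c16: False if "p = (3::complex)" "s0 = (-1::complex)"
    using H[rule_format, of "-1"] H[rule_format, of "0"] that by (auto simp: insert_Diff_if)
  have c17: False if "p = (3::complex)" "s0 = (0::complex)"
    using H[rule_format, of "-1"] H[rule_format, of "0"] that by (auto simp: insert_Diff_if)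
  have c18: False if "p = (3::complex)" "s0 = (1::complex)"
    using H[rule_format, of "-1"] H[rule_format, of "0"] that by (auto simp: insert_Diff_if)
  have c19: False if "p = (3::complex)" "s0 = (3::complex)"
    using H[rule_format, of "-1"] H[rule_format, of "0"] H[rule_format, of "1"] that by (auto simp: insert_Diff_if)
  have c20: False if "p = (3::complex)" "s0 = (8::complex)"
    using H[rule_format, of "-1"] H[rule_format, of "0"] that by (auto simp: insert_Diff_if)
  have c21: False if "p = (8::complex)" "s0 = (-1::complex)"
    using H[rule_format, of "-1"] H[rule_format, of "0"] that by (auto simp: insert_Diff_if)
  have c22: False if "p = (8::complex)" "s0 = (0::complex)"
    using H[rule_format, of "-1"] H[rule_format, of "0"] that by (auto simp: insert_Diff_if)
  have c23: False if "p = (8::complex)" "s0 = (1::complex)"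
    using H[rule_format, of "-1"] H[rule_format, of "0"] that by (auto simp: insert_Diff_if)
  have c24: False if "p = (8::complex)" "s0 = (3::complex)"
    using H[rule_format, of "-1"] H[rule_format, of "0"] that by (auto simp: insert_Diff_if)
  have c25: False if "p = (8::complex)" "s0 = (8::complex)"
    using H[rule_format, of "-1"] H[rule_format, of "0"] H[rule_format, of "1"] that by (auto simp: insert_Diff_if)
  have pc: "p = (-1::complex) \<or> p = (0::complex) \<or> p = (1::complex) \<or> p = (3::complex) \<or> p = (8::complex)" using p by simp
  have sc: "s0 = (-1::complex) \<or> s0 = (0::complex) \<or> s0 = (1::complex) \<or> s0 = (3::complex) \<or> s0 = (8::complex)" using s0 by simp
  show False using pc sc c1 c2 c3 c4 c5 c6 c7 c8 c9 c10 c11 c12 c13 c14 c15 c16 c17 c18 c19 c20 c21 c22 c23 c24 c25 by argo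
qed

lemma mob_S:
  "\<not> (\<exists>p\<in>{0,1,3,8::complex}. \<exists>s0\<in>{0,1,3,8::complex}. \<exists>k. \<forall>q\<in>{0,1,3,8} - {p}. \<exists>w\<in>{0,1,3,8} - {s0}. (w - s0) * (q - p) = k)"
proof clarify
  fix p s0 k
  assume p: "p \<in> {0,1,3,8::complex}" and s0: "s0 \<in> {0,1,3,8::complex}"
    and H: "\<forall>q\<in>{0,1,3,8} - {p}. \<exists>w\<in>{0,1,3,8} - {s0}. (w - s0) * (q - p) = k"
  have c1: False if "p = (0::complex)" "s0 = (0::complex)"
    using H[rule_format, of "1"] H[rule_format, of "3"] H[rule_format, of "8"] that by (auto simp: insert_Diff_if)
  have c2: False if "p = (0::complex)" "s0 = (1::complex)"
    using H[rule_format, of "1"] H[rule_format, of "3"] that by (auto simp: insert_Diff_if)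
  have c3: False if "p = (0::complex)" "s0 = (3::complex)"
    using H[rule_format, of "1"] H[rule_format, of "3"] that by (auto simp: insert_Diff_if)
  have c4: False if "p = (0::complex)" "s0 = (8::complex)"
    using H[rule_format, of "1"] H[rule_format, of "3"] that by (auto simp: insert_Diff_if)
  have c5: False if "p = (1::complex)" "s0 = (0::complex)"
    using H[rule_format, of "0"] H[rule_format, of "3"] that by (auto simp: insert_Diff_if)
  have c6: False if "p = (1::complex)" "s0 = (1::complex)"
    using H[rule_format, of "0"] H[rule_format, of "3"] H[rule_format, of "8"] that by (auto simp: insert_Diff_if)
  have c7: False if "p = (1::complex)" "s0 = (3::complex)"
    using H[rule_format, of "0"] H[rule_format, of "3"] that by (auto simp: insert_Diff_if)
  have c8: False if "p = (1::complex)" "s0 = (8::complex)"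
    using H[rule_format, of "0"] H[rule_format, of "3"] that by (auto simp: insert_Diff_if)
  have c9: False if "p = (3::complex)" "s0 = (0::complex)"
    using H[rule_format, of "0"] H[rule_format, of "1"] that by (auto simp: insert_Diff_if)
  have c10: False if "p = (3::complex)" "s0 = (1::complex)"
    using H[rule_format, of "0"] H[rule_format, of "1"] that by (auto simp: insert_Diff_if)
  have c11: False if "p = (3::complex)" "s0 = (3::complex)"
    using H[rule_format, of "0"] H[rule_format, of "1"] H[rule_format, of "8"] that by (auto simp: insert_Diff_if)
  have c12: False if "p = (3::complex)" "s0 = (8::complex)"
    using H[rule_format, of "0"] H[rule_format, of "1"] that by (auto simp: insert_Diff_if)
  have c13: False if "p = (8::complex)" "s0 = (0::complex)"
    using H[rule_format, of "0"] H[rule_format, of "1"] that by (auto simp: insert_Diff_if)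
  have c14: False if "p = (8::complex)" "s0 = (1::complex)"
    using H[rule_format, of "0"] H[rule_format, of "1"] that by (auto simp: insert_Diff_if)
  have c15: False if "p = (8::complex)" "s0 = (3::complex)"
    using H[rule_format, of "0"] H[rule_format, of "1"] that by (auto simp: insert_Diff_if)
  have c16: False if "p = (8::complex)" "s0 = (8::complex)"
    using H[rule_format, of "0"] H[rule_format, of "1"] H[rule_format, of "3"] that by (auto simp: insert_Diff_if)
  have pc: "p = (0::complex) \<or> p = (1::complex) \<or> p = (3::complex) \<or> p = (8::complex)" using p by simp
  have sc: "s0 = (0::complex) \<or> s0 = (1::complex) \<or> s0 = (3::complex) \<or> s0 = (8::complex)" using s0 by simp
  show False using pc sc c1 c2 c3 c4 c5 c6 c7 c8 c9 c10 c11 c12 c13 c14 c15 c16 by argo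
qed

lemma rigid_S: "rigid {0,1,3,8::complex}"
  by (rule rigid_of[OF _ _ aff_S mob_S]) simp_all

lemma rigid_T: "rigid {-1,0,1,3,8::complex}"
  by (rule rigid_of[OF _ _ aff_T mob_T]) simp_all

definition NN :: "complex set" where "NN = {z. \<exists>k::nat. z = - of_nat k - 1}"
definition hphi :: "complex \<Rightarrow> complex" where "hphi z = (if z \<in> NN then z - 1 else z)"
definition hpsi :: "complex \<Rightarrow> complex" where "hpsi z = (if z \<in> NN \<and> z \<noteq> -1 then z + 1 else z)"

lemma NN_Re: "z \<in> NN \<Longrightarrow> Re z \<le> -1" by (auto simp: NN_def)
lemma NN_m1: "-1 \<in> NN" by (auto simp: NN_def intro: exI[of _ 0])
lemma NN_minus: "z \<in> NN \<Longrightarrow> z - 1 \<in> NN"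
proof -
  assume "z \<in> NN"
  then obtain k :: nat where k: "z = - of_nat k - 1" by (auto simp: NN_def)
  then have "z - 1 = - of_nat (Suc k) - 1" by simp
  then show ?thesis unfolding NN_def by blast
qed
lemma NN_plus: "z \<in> NN \<Longrightarrow> z \<noteq> -1 \<Longrightarrow> z + 1 \<in> NN"
proof -
  assume "z \<in> NN" "z \<noteq> -1"
  then obtain k :: nat where k: "z = - of_nat k - 1" by (auto simp: NN_def)
  with \<open>z \<noteq> -1\<close> have "k \<noteq> 0" by auto
  then obtain m where "k = Suc m" by (cases k) auto
  then show ?thesis using k by (auto simp: NN_def intro!: exI[of _ m])
qed

lemma Re_S: "x \<in> {0,1,3,8::complex} \<Longrightarrow> Re x \<ge> 0" by auto
lemma Re_T: "x \<in> {-1,0,1,3,8::complex} \<Longrightarrow> Re x \<ge> -1" by auto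

lemma hphi_maps: "x \<notin> {0,1,3,8} \<Longrightarrow> hphi x \<notin> {-1,0,1,3,8}"
proof -
  assume x: "x \<notin> {0,1,3,8}"
  show ?thesis
  proof (cases "x \<in> NN")
    case True
    then have "Re (hphi x) \<le> -2" using NN_Re[OF True] by (simp add: hphi_def)
    then show ?thesis using Re_T by force
  next
    case False
    then have "x \<noteq> -1" using NN_m1 by auto
    then show ?thesis using x False by (simp add: hphi_def)
  qed
qed

lemma hpsi_maps: "y \<notin> {-1,0,1,3,8} \<Longrightarrow> hpsi y \<notin> {0,1,3,8}"
proof -
  assume y: "y \<notin> {-1,0,1,3,8}"
  show ?thesis
  proof (cases "y \<in> NN \<and> y \<noteq> -1")
    case True
    then have "hpsi y \<in> NN" using NN_plus by (simp add: hpsi_def)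
    then have "Re (hpsi y) \<le> -1" by (rule NN_Re)
    then show ?thesis using Re_S by force
  next
    case False
    then show ?thesis using y by (simp add: hpsi_def)
  qed
qed

lemma hpsi_hphi: "x \<notin> {0,1,3,8} \<Longrightarrow> hpsi (hphi x) = x"
proof (cases "x \<in> NN")
  case True
  have "Re (x - 1) \<le> -2" using NN_Re[OF True] by simp
  then have "x - 1 \<noteq> -1" by auto
  then show ?thesis using True NN_minus[OF True] by (simp add: hphi_def hpsi_def)
next
  case False
  then show ?thesis by (simp add: hphi_def hpsi_def)
qed

lemma hphi_hpsi: "y \<notin> {-1,0,1,3,8} \<Longrightarrow> hphi (hpsi y) = y"
proof (cases "y \<in> NN \<and> y \<noteq> -1")
  case True
  then show ?thesis using NN_plus[of y] by (simp add: hphi_def hpsi_def)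
next
  case False
  assume y: "y \<notin> {-1,0,1,3,8}"
  then have "y \<noteq> -1" by auto
  with False have "y \<notin> NN" by auto
  then show ?thesis using False by (simp add: hphi_def hpsi_def)
qed

lemma cnj_T: "cnj w \<in> {-1,0,1,3,8::complex} \<longleftrightarrow> w \<in> {-1,0,1,3,8}"
  by (auto simp: complex_eq_iff)

lemma cconj_DS: "v \<in> DS {-1,0,1,3,8} \<Longrightarrow> cconj v \<in> DS {-1,0,1,3,8}"
  by (simp add: DS_def cconj_def cnj_T del: insert_iff)

lemma cconj_inj: "cconj (cconj v) = v"
  by (simp add: cconj_def vec_eq_iff)

theorem theorem3:
  shows "\<exists>D1 D2 :: (complex^'n) set.
           domain_cn D1 \<and> domain_cn D2 \<and> \<not> bounded D1 \<and> \<not> bounded D2 \<and>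
           semigroups_iso D1 D2 \<and>
           (\<nexists>f. biholo_onto f D1 D2) \<and> (\<nexists>f. antibiholo_onto f D1 D2)"
proof (intro exI conjI)
  let ?S = "{0,1,3,8::complex}" and ?T = "{-1,0,1,3,8::complex}"
  let ?D1 = "DS ?S :: (complex^'n) set" and ?D2 = "DS ?T :: (complex^'n) set"
  have fS: "finite ?S" and fT: "finite ?T" by auto
  have cS: "card ?S = 4" and cT: "card ?T = 5" by auto
  have dom: "domain_cn (DS S :: (complex^'n) set)" if fin: "finite S" for S :: "complex set"
  proof -
    obtain z1 z2 :: "complex^'n" where "z1 \<in> DS S" using two_points_DS[OF fin] by metis
    then show ?thesis unfolding domain_cn_def
      using open_DS[OF fin] path_connected_imp_connected[OF path_connected_DS[OF fin]] by auto
  qed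
  show "domain_cn ?D1" by (rule dom[OF fS])
  show "domain_cn ?D2" by (rule dom[OF fT])
  show "\<not> bounded ?D1" by (rule unbounded_DS[OF fS])
  show "\<not> bounded ?D2" by (rule unbounded_DS[OF fT])
  show "semigroups_iso ?D1 ?D2"
    by (rule iso[OF fS fT rigid_S rigid_T hphi_maps hpsi_maps hpsi_hphi hphi_hpsi])
  obtain z1 z2 :: "complex^'n" where z: "z1 \<in> ?D1" "z2 \<in> ?D1" "z1 \<noteq> z2"
    using two_points_DS[OF fS] by metis
  show "\<nexists>f. biholo_onto f ?D1 ?D2"
  proof
    assume "\<exists>f. biholo_onto f ?D1 ?D2"
    then obtain f where b: "bij_betw f ?D1 ?D2" and h: "holo_on f ?D1"
      unfolding biholo_onto_def by blast
    have into: "\<And>z. z \<in> ?D1 \<Longrightarrow> f z \<in> ?D2" using b by (auto simp: bij_betw_def)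
    have "f z2 = f z1" by (rule Hom_const_nd[OF fS fT _ _ h into z(1) z(2)]) (simp_all add: cS cT)
    moreover have "inj_on f ?D1" using b by (simp add: bij_betw_def)
    ultimately have "z2 = z1" using z(1,2) inj_onD by metis
    then show False using z(3) by simp
  qed
  show "\<nexists>f. antibiholo_onto f ?D1 ?D2"
  proof
    assume "\<exists>f. antibiholo_onto f ?D1 ?D2"
    then obtain f where b: "bij_betw f ?D1 ?D2" and h: "holo_on (\<lambda>z. cconj (f z)) ?D1"
      unfolding antibiholo_onto_def antiholo_on_def by blast
    have into: "\<And>z. z \<in> ?D1 \<Longrightarrow> cconj (f z) \<in> ?D2" using b cconj_DS by (auto simp: bij_betw_def)
    have "cconj (f z2) = cconj (f z1)"
      by (rule Hom_const_nd[OF fS fT _ _ h into z(1) z(2)]) (simp_all add: cS cT)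
    then have "f z2 = f z1" by (metis cconj_inj)
    moreover have "inj_on f ?D1" using b by (simp add: bij_betw_def)
    ultimately have "z2 = z1" using z(1,2) inj_onD by metis
    then show False using z(3) by simp
  qed
qed

end
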